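(* Let $n\in(0,1)$, let $I=(0,\infty)$ and $\lambda(z)=z^{-n}$, and fix a sign $\pm$. Then there exists $c>0$ with $8c^2(1\pm c^{-n})=n(1-n)$, and for every such $c$ and every $b\in\mathbb{R}$ the Legendre curve $\gamma_{\{b,c\}}(s)=(b,s,c)$ in $\tilde M(1-\lambda^2,2(1\pm\lambda))$ is proper biharmonic.
   Context: Definition of $\tilde M(1-\lambda^2,2(1\pm\lambda))$: Let $\lambda:I\to\mathbb{R}$ be a non-constant positive smooth function on an open interval $I$, $\lambda'=d\lambda/dz$. On $\tilde M^3=\mathbb{R}^2\times I\subset\mathbb{R}^3$ with coordinates $(x,y,z)$ consider the vector fields $e_1=\partial_x$, $e_2=\partial_y$, $e_3=(\pm 2y+f(z))\partial_x+\big(2\lambda x-\frac{\lambda'}{2\lambda}y+h(z)\big)\partial_y+\partial_z$, where $f,h$ are arbitrary smooth functions of $z$. Let $g$ be the Riemannian metric with $g(e_i,e_j)=\delta_{ij}$, $\xi=e_1$, $\eta$ the $1$-form dual to $e_1$, and $\phi$ the $(1,1)$-tensor with $\phi e_1=0$, $\phi e_2=\pm e_3$, $\phi e_3=\mp e_2$ (all double signs correspond to the sign in $\pm 2y$). This is a contact metric manifold which is a generalized $(\kappa,\mu)$-manifold with $\kappa=1-\lambda^2$, $\mu=2(1\pm\lambda)$. A curve parametrized by arclength is Legendre if $\eta(\gamma')=0$. A curve (isometric immersion) is biharmonic if its bitension field $\tau_2=-\Delta\tau+\mathrm{trace}\,\tilde R(\tau,d\gamma)d\gamma$ vanishes, equivalently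 $\tilde\nabla_T\tilde\nabla_T\tilde\nabla_T T+\tilde R(\tilde\nabla_T T,T)T=0$ for the unit tangent $T$, with $\tilde R(X,Y)=[\tilde\nabla_X,\tilde\nabla_Y]-\tilde\nabla_{[X,Y]}$; it is proper biharmonic if it is biharmonic and not a geodesic. *)

theory Defs
  imports "HOL-Analysis.Analysis"
begin

text \<open>Coordinates on R^3 are indexed 0 (x), 1 (y), 2 (z). Points and tangent
vectors (components w.r.t. the coordinate fields d/dx, d/dy, d/dz) are
represented as functions nat => real, supported on indices < 3.
A global frame E assigns to a point p the coordinate components E p i of the
vector field e_(i+1), i < 3.\<close>

type_synonym vec = "nat \<Rightarrow> real"
type_synonym frame = "vec \<Rightarrow> nat \<Rightarrow> vec"

definition unitv :: "nat \<Rightarrow> vec" where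
  "unitv j = (\<lambda>k. if k = j then 1 else 0)"

definition pd :: "(vec \<Rightarrow> real) \<Rightarrow> nat \<Rightarrow> vec \<Rightarrow> real" where
  "pd F i p = deriv (\<lambda>t. F (p(i := p i + t))) 0"

definition frame_coeffs :: "frame \<Rightarrow> vec \<Rightarrow> vec \<Rightarrow> vec" where
  "frame_coeffs E p X = (THE a. (\<forall>k<3. X k = (\<Sum>i<3. a i * E p i k)) \<and> (\<forall>i\<ge>3. a i = 0))"

text \<open>The Riemannian metric for which the frame E is orthonormal:
g(X,Y) = sum of products of frame components; metric coefficients g_jl.\<close>
definition gmat :: "frame \<Rightarrow> vec \<Rightarrow> nat \<Rightarrow> nat \<Rightarrow> real" where
  "gmat E p j l = (\<Sum>i<3. frame_coeffs E p (unitv j) i * frame_coeffs E p (unitv l) i)"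

definition ginner :: "frame \<Rightarrow> vec \<Rightarrow> vec \<Rightarrow> vec \<Rightarrow> real" where
  "ginner E p X Y = (\<Sum>j<3. \<Sum>l<3. gmat E p j l * X j * Y l)"

definition ginv :: "frame \<Rightarrow> vec \<Rightarrow> nat \<Rightarrow> nat \<Rightarrow> real" where
  "ginv E p = (THE H. (\<forall>j<3. \<forall>l<3. (\<Sum>m<3. gmat E p j m * H m l) = (if j = l then 1 else 0))
                    \<and> (\<forall>j l. (3 \<le> j \<or> 3 \<le> l) \<longrightarrow> H j l = 0))"

definition christ :: "frame \<Rightarrow> vec \<Rightarrow> nat \<Rightarrow> nat \<Rightarrow> nat \<Rightarrow> real" where
  "christ E p k i j = (1/2) * (\<Sum>l<3. ginv E p k l *
      (pd (\<lambda>q. gmat E q j l) i p + pd (\<lambda>q. gmat E q i l) j p - pd (\<lambda>q. gmat E q i j) l p))"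

text \<open>Riemann tensor R(d_i,d_j)d_k = sum_l R^l_ijk d_l with
R(X,Y) = [nabla_X, nabla_Y] - nabla_[X,Y].\<close>
definition riem :: "frame \<Rightarrow> vec \<Rightarrow> nat \<Rightarrow> nat \<Rightarrow> nat \<Rightarrow> nat \<Rightarrow> real" where
  "riem E p l i j k = pd (\<lambda>q. christ E q l j k) i p - pd (\<lambda>q. christ E q l i k) j p
     + (\<Sum>m<3. christ E p l i m * christ E p m j k - christ E p l j m * christ E p m i k)"

definition curv :: "frame \<Rightarrow> vec \<Rightarrow> vec \<Rightarrow> vec \<Rightarrow> vec \<Rightarrow> vec" where
  "curv E p X Y Z = (\<lambda>l. \<Sum>i<3. \<Sum>j<3. \<Sum>k<3. riem E p l i j k * X i * Y j * Z k)"

definition vel :: "(real \<Rightarrow> vec) \<Rightarrow> real \<Rightarrow> vec" where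
  "vel \<gamma> s = (\<lambda>k. deriv (\<lambda>t. \<gamma> t k) s)"

definition cov :: "frame \<Rightarrow> (real \<Rightarrow> vec) \<Rightarrow> (real \<Rightarrow> vec) \<Rightarrow> real \<Rightarrow> vec" where
  "cov E \<gamma> V s = (\<lambda>k. deriv (\<lambda>t. V t k) s
       + (\<Sum>i<3. \<Sum>j<3. christ E (\<gamma> s) k i j * vel \<gamma> s i * V s j))"

definition biharmonic :: "frame \<Rightarrow> (real \<Rightarrow> vec) \<Rightarrow> bool" where
  "biharmonic E \<gamma> \<longleftrightarrow>
     (let T = vel \<gamma>; T1 = cov E \<gamma> T; T2 = cov E \<gamma> T1; T3 = cov E \<gamma> T2
      in \<forall>s. \<forall>k<3. T3 s k + curv E (\<gamma> s) (T1 s) (T s) (T s) k = 0)"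

definition geodesic :: "frame \<Rightarrow> (real \<Rightarrow> vec) \<Rightarrow> bool" where
  "geodesic E \<gamma> \<longleftrightarrow> (\<forall>s. \<forall>k<3. cov E \<gamma> (vel \<gamma>) s k = 0)"

definition proper_biharmonic :: "frame \<Rightarrow> (real \<Rightarrow> vec) \<Rightarrow> bool" where
  "proper_biharmonic E \<gamma> \<longleftrightarrow> biharmonic E \<gamma> \<and> \<not> geodesic E \<gamma>"

text \<open>Arclength-parametrized Legendre curve: g(gamma',gamma') = 1 and
eta(gamma') = g(xi, gamma') = 0 with xi = e_1.\<close>
definition legendre_curve :: "frame \<Rightarrow> (real \<Rightarrow> vec) \<Rightarrow> bool" where
  "legendre_curve E \<gamma> \<longleftrightarrow>
     (\<forall>s. ginner E (\<gamma> s) (vel \<gamma> s) (vel \<gamma> s) = 1 \<and> ginner E (\<gamma> s) (E (\<gamma> s) 0) (vel \<gamma> s) = 0)"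

text \<open>The frame e_1, e_2, e_3 of M(1-lambda^2, 2(1 +- lambda)); sg = +1 or -1
is the sign.\<close>
definition kmu_frame :: "real \<Rightarrow> (real \<Rightarrow> real) \<Rightarrow> (real \<Rightarrow> real) \<Rightarrow> (real \<Rightarrow> real) \<Rightarrow> frame" where
  "kmu_frame sg lam f h p i =
     (if i = 0 then unitv 0
      else if i = 1 then unitv 1
      else if i = 2 then
        (\<lambda>k. if k = 0 then sg * 2 * p 1 + f (p 2)
             else if k = 1 then 2 * lam (p 2) * p 0 - deriv lam (p 2) / (2 * lam (p 2)) * p 1 + h (p 2)
             else if k = 2 then 1 else 0)
      else (\<lambda>k. 0))"

definition smooth_pos :: "(real \<Rightarrow> real) \<Rightarrow> bool" where
  "smooth_pos f \<longleftrightarrow> (\<forall>m. \<forall>z>0. ((deriv ^^ m) f) differentiable (at z))"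

definition gamma_bc :: "real \<Rightarrow> real \<Rightarrow> real \<Rightarrow> vec" where
  "gamma_bc b c s = (\<lambda>k. if k = 0 then b else if k = 1 then s else if k = 2 then c else 0)"

end

theory Submission
  imports Defs
begin


lemma sum3: "(\<Sum>m::nat<3. g m) = g 0 + g 1 + (g 2 :: real)"
  by (simp add: eval_nat_numeral)

lemma less3: "(k::nat) < 3 \<longleftrightarrow> k = 0 \<or> k = 1 \<or> k = 2" by auto

locale kmu =
  fixes sg :: real and L aa f h L1 a1 f1 h1 :: "real \<Rightarrow> real"
  assumes sgc: "sg = 1 \<or> sg = -1"
  and aa_eq: "\<And>z. deriv L z / (2 * L z) = aa z"
  and dL: "\<And>z. z > 0 \<Longrightarrow> (L has_real_derivative L1 z) (at z)"
  and da: "\<And>z. z > 0 \<Longrightarrow> (aa has_real_derivative a1 z) (at z)"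
  and df: "\<And>z. z > 0 \<Longrightarrow> (f has_real_derivative f1 z) (at z)"
  and dh: "\<And>z. z > 0 \<Longrightarrow> (h has_real_derivative h1 z) (at z)"
begin

abbreviation "E \<equiv> kmu_frame sg L f h"

definition Ap :: "vec \<Rightarrow> real" where "Ap p = sg * 2 * p 1 + f (p 2)"
definition Bp :: "vec \<Rightarrow> real" where "Bp p = 2 * L (p 2) * p 0 - aa (p 2) * p 1 + h (p 2)"

lemma E_eq: "E p i = (if i = 0 then unitv 0 else if i = 1 then unitv 1 else if i = 2 then
   (\<lambda>k. if k = 0 then Ap p else if k = 1 then Bp p else if k = 2 then 1 else 0) else (\<lambda>k. 0))"
  unfolding kmu_frame_def Ap_def Bp_def using aa_eq[symmetric] by (auto simp: fun_eq_iff)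

lemma fc: "frame_coeffs E p X = (\<lambda>k::nat. if k = 0 then X 0 - Ap p * X 2 else if k = 1 then X 1 - Bp p * X 2
    else if k = 2 then X 2 else 0)"
  unfolding frame_coeffs_def
proof (rule the_equality)
  show "(\<forall>k<3. X k = (\<Sum>i<3. (\<lambda>k::nat. if k = 0 then X 0 - Ap p * X 2 else if k = 1 then X 1 - Bp p * X 2
    else if k = 2 then X 2 else 0) i * E p i k)) \<and> (\<forall>i\<ge>3. (\<lambda>k::nat. if k = 0 then X 0 - Ap p * X 2 else if k = 1 then X 1 - Bp p * X 2
    else if k = 2 then X 2 else 0) i = 0)"
    by (auto simp: E_eq eval_nat_numeral unitv_def less_Suc_eq)
next
  fix a assume a: "(\<forall>k<3. X k = (\<Sum>i<3. a i * E p i k)) \<and> (\<forall>i\<ge>3. a i = 0)"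
  have "X 0 = a 0 + a 2 * Ap p" "X 1 = a 1 + a 2 * Bp p" "X 2 = a 2"
    using a by (auto simp: E_eq eval_nat_numeral unitv_def)
  then show "a = (\<lambda>k::nat. if k = 0 then X 0 - Ap p * X 2 else if k = 1 then X 1 - Bp p * X 2
    else if k = 2 then X 2 else 0)"
    using a by (auto simp: fun_eq_iff)
qed

definition gm :: "vec \<Rightarrow> nat \<Rightarrow> nat \<Rightarrow> real" where
 "gm p j l = (if j = 0 \<and> l = 0 then 1 else if j = 1 \<and> l = 1 then 1
   else if (j = 0 \<and> l = 2) \<or> (j = 2 \<and> l = 0) then - Ap p
   else if (j = 1 \<and> l = 2) \<or> (j = 2 \<and> l = 1) then - Bp p
   else if j = 2 \<and> l = 2 then Ap p ^ 2 + Bp p ^ 2 + 1 else 0)"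

lemma gmat_eq: "gmat E p j l = gm p j l"
  unfolding gmat_def fc gm_def
  by (auto simp: eval_nat_numeral unitv_def power2_eq_square)


definition gi :: "vec \<Rightarrow> nat \<Rightarrow> nat \<Rightarrow> real" where
 "gi p j l = (if j = 0 \<and> l = 0 then 1 + Ap p ^ 2 else if j = 1 \<and> l = 1 then 1 + Bp p ^ 2
   else if (j = 0 \<and> l = 1) \<or> (j = 1 \<and> l = 0) then Ap p * Bp p
   else if (j = 0 \<and> l = 2) \<or> (j = 2 \<and> l = 0) then Ap p
   else if (j = 1 \<and> l = 2) \<or> (j = 2 \<and> l = 1) then Bp p
   else if j = 2 \<and> l = 2 then 1 else 0)"

lemma ginv_eq: "ginv E p = gi p"
  unfolding ginv_def gmat_eq
proof (rule the_equality)
  show "(\<forall>j<3. \<forall>l<3. (\<Sum>m<3. gm p j m * gi p m l) = (if j = l then 1 else 0)) \<and>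
    (\<forall>j l. 3 \<le> j \<or> 3 \<le> l \<longrightarrow> gi p j l = 0)"
    apply (intro conjI allI impI)
    subgoal for j l unfolding less3 sum3 by (elim disjE) (simp_all add: gm_def gi_def field_simps power2_eq_square)
    subgoal by (auto simp: gi_def)
    done
next
  fix H assume H: "(\<forall>j<3. \<forall>l<3. (\<Sum>m<3. gm p j m * H m l) = (if j = l then 1 else 0)) \<and>
    (\<forall>j l. 3 \<le> j \<or> 3 \<le> l \<longrightarrow> H j l = 0)"
  have e: "\<And>l. l < 3 \<Longrightarrow> H 0 l - Ap p * H 2 l = (if l = 0 then 1 else 0)"
          "\<And>l. l < 3 \<Longrightarrow> H 1 l - Bp p * H 2 l = (if l = 1 then 1 else 0)"
          "\<And>l. l < 3 \<Longrightarrow> - Ap p * H 0 l - Bp p * H 1 l + (Ap p ^ 2 + Bp p ^ 2 + 1) * H 2 l = (if l = 2 then 1 else 0)"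
  proof -
    fix l :: nat assume l: "l < 3"
    from H have Hj: "\<And>j l. j<3 \<Longrightarrow> l<3 \<Longrightarrow> (\<Sum>m<3. gm p j m * H m l) = (if j = l then 1 else 0)" by blast
    have "(\<Sum>m<3. gm p 0 m * H m l) = (if 0 = l then 1 else 0)"
         "(\<Sum>m<3. gm p 1 m * H m l) = (if 1 = l then 1 else 0)"
         "(\<Sum>m<3. gm p 2 m * H m l) = (if 2 = l then 1 else 0)" using Hj[OF _ l] by auto
    then show "H 0 l - Ap p * H 2 l = (if l = 0 then 1 else 0)"
          "H 1 l - Bp p * H 2 l = (if l = 1 then 1 else 0)"
          "- Ap p * H 0 l - Bp p * H 1 l + (Ap p ^ 2 + Bp p ^ 2 + 1) * H 2 l = (if l = 2 then 1 else 0)"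
      by (simp_all add: sum3 gm_def eq_commute[of 0 l] eq_commute[of 1 l] eq_commute[of 2 l])
  qed
  have k: "H j l = gi p j l" if "j < 3" "l < 3" for j l
  proof -
    have e0: "H 0 l - Ap p * H 2 l = (if l = 0 then 1 else 0)"
     and e1: "H 1 l - Bp p * H 2 l = (if l = 1 then 1 else 0)"
     and e2: "- Ap p * H 0 l - Bp p * H 1 l + (Ap p ^ 2 + Bp p ^ 2 + 1) * H 2 l = (if l = 2 then 1 else 0)"
      using e that by auto
    have h2: "H 2 l = (if l = 0 then Ap p else if l = 1 then Bp p else 1)"
    proof -
      have "H 2 l = Ap p * (H 0 l - Ap p * H 2 l) + Bp p * (H 1 l - Bp p * H 2 l) +
        (- Ap p * H 0 l - Bp p * H 1 l + (Ap p ^ 2 + Bp p ^ 2 + 1) * H 2 l)"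
        by (simp add: algebra_simps power2_eq_square)
      then show ?thesis using e0 e1 e2 that by (auto simp: less3)
    qed
    have "H 0 l = (if l = 0 then 1 else 0) + Ap p * H 2 l" "H 1 l = (if l = 1 then 1 else 0) + Bp p * H 2 l"
      using e0 e1 by auto
    then show ?thesis using h2 that unfolding less3
      by (elim disjE) (simp_all add: gi_def power2_eq_square)
  qed
  show "H = gi p"
  proof (intro ext)
    fix j l show "H j l = gi p j l"
    proof (cases "j < 3 \<and> l < 3")
      case True then show ?thesis using k by auto
    next
      case False then have "3 \<le> j \<or> 3 \<le> l" by auto
      then show ?thesis using H[THEN conjunct2, rule_format, of j l] by (auto simp: gi_def)
    qed
  qed
qed


lemma pd_at: "((\<lambda>t. F (p(i := p i + t))) has_real_derivative D) (at 0) \<Longrightarrow> pd F i p = D"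
  unfolding pd_def by (rule DERIV_imp_deriv)

lemma dcoord: "((\<lambda>t. (p(i := p i + t)) k) has_real_derivative (if k = i then 1 else 0)) (at 0)"
  by (cases "k = i") (auto intro!: derivative_eq_intros)

lemma dcomp: fixes p :: vec assumes "(\<phi> has_real_derivative d) (at (p 2))"
  shows "((\<lambda>t. \<phi> ((p(i := p i + t)) 2)) has_real_derivative (if i = 2 then d else 0)) (at 0)"
proof (cases "i = 2")
  case True
  have "((\<lambda>t. \<phi> (t + p 2)) has_real_derivative d) (at 0)"
    using assms DERIV_shift[of \<phi> d 0 "p 2"] by simp
  then show ?thesis using True by (simp add: add.commute)
next
  case False then show ?thesis by simp
qed

definition dA :: "vec \<Rightarrow> nat \<Rightarrow> real" where
  "dA p i = (if i = 1 then sg * 2 else if i = 2 then f1 (p 2) else 0)"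
definition dB :: "vec \<Rightarrow> nat \<Rightarrow> real" where
  "dB p i = (if i = 0 then 2 * L (p 2) else if i = 1 then - aa (p 2)
     else if i = 2 then 2 * L1 (p 2) * p 0 - a1 (p 2) * p 1 + h1 (p 2) else 0)"

lemma dAp: assumes "p 2 > 0" shows "((\<lambda>t. Ap (p(i := p i + t))) has_real_derivative dA p i) (at 0)"
proof -
  have 1: "((\<lambda>t. sg * 2 * (p(i := p i + t)) 1 + f ((p(i := p i + t)) 2)) has_real_derivative
     sg * 2 * (if 1 = i then 1 else 0) + (if i = 2 then f1 (p 2) else 0)) (at 0)"
    by (rule derivative_eq_intros dcoord dcomp df assms refl)+ simp
  show ?thesis unfolding Ap_def dA_def using 1 by (cases "i = 1"; cases "i = 2") auto
qed

lemma dBp: assumes "p 2 > 0" shows "((\<lambda>t. Bp (p(i := p i + t))) has_real_derivative dB p i) (at 0)"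
proof -
  have 1: "((\<lambda>t. 2 * L ((p(i := p i + t)) 2) * (p(i := p i + t)) 0 - aa ((p(i := p i + t)) 2) * (p(i := p i + t)) 1 + h ((p(i := p i + t)) 2)) has_real_derivative
     2 * (if i = 2 then L1 (p 2) else 0) * (p(i := p i + 0)) 0 + 2 * L ((p(i := p i + 0)) 2) * (if 0 = i then 1 else 0)
     - ((if i = 2 then a1 (p 2) else 0) * (p(i := p i + 0)) 1 + aa ((p(i := p i + 0)) 2) * (if 1 = i then 1 else 0))
     + (if i = 2 then h1 (p 2) else 0)) (at 0)"
    by (rule derivative_eq_intros dcoord dcomp dL da dh assms refl)+ simp
  show ?thesis unfolding Bp_def dB_def using 1 by (cases "i = 0"; cases "i = 1"; cases "i = 2") auto
qed


definition dgm :: "vec \<Rightarrow> nat \<Rightarrow> nat \<Rightarrow> nat \<Rightarrow> real" where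
 "dgm p i j l = (if (j = 0 \<and> l = 2) \<or> (j = 2 \<and> l = 0) then - dA p i
   else if (j = 1 \<and> l = 2) \<or> (j = 2 \<and> l = 1) then - dB p i
   else if j = 2 \<and> l = 2 then 2 * Ap p * dA p i + 2 * Bp p * dB p i else 0)"

lemma pdg: assumes "p 2 > 0" "j < 3" "l < 3"
  shows "pd (\<lambda>q. gmat E q j l) i p = dgm p i j l"
proof -
  have A: "((\<lambda>t. Ap (p(i := p i + t))) has_real_derivative dA p i) (at 0)"
   and B: "((\<lambda>t. Bp (p(i := p i + t))) has_real_derivative dB p i) (at 0)"
    using dAp dBp assms by auto
  have "((\<lambda>t. gm (p(i := p i + t)) j l) has_real_derivative dgm p i j l) (at 0)"
    using assms(2,3) unfolding less3
    apply (elim disjE)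
    apply (simp_all add: gm_def dgm_def)
    apply (rule derivative_eq_intros A B refl | simp)+
    done
  then show ?thesis unfolding gmat_eq by (rule pd_at)
qed


definition e3 :: "vec \<Rightarrow> nat \<Rightarrow> real" where
  "e3 p k = (if k = 0 then Ap p else if k = 1 then Bp p else if k = 2 then 1 else 0)"

definition GV :: "vec \<Rightarrow> nat \<Rightarrow> nat \<Rightarrow> nat \<Rightarrow> real" where
 "GV p i j k = (let z = p 2 in
   if i = 0 \<and> j = 0 then 0
   else if i = 0 \<and> j = 1 then - (sg + L z) * e3 p k
   else if i = 1 \<and> j = 1 then aa z * e3 p k
   else if i = 0 \<and> j = 2 then (sg - L z) * unitv 1 k + Bp p * (sg + L z) * e3 p k
   else if i = 1 \<and> j = 2 then (L z - sg) * unitv 0 k + (Ap p * (L z + sg) - aa z * Bp p) * e3 p k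
   else if i = 2 \<and> j = 2 then (- f1 z - 2 * Bp p * L z) * unitv 0 k
       + (- 2 * sg * Ap p + aa z * Bp p - (2 * L1 z * p 0 - a1 z * p 1 + h1 z)) * unitv 1 k
       + (- 2 * Ap p * Bp p * (sg + L z) + aa z * Bp p ^ 2) * e3 p k
   else 0)"

definition Gam :: "vec \<Rightarrow> nat \<Rightarrow> nat \<Rightarrow> nat \<Rightarrow> real" where
  "Gam p k i j = GV p (min i j) (max i j) k"

lemma christ_eq: assumes "p 2 > 0" "k < 3" "i < 3" "j < 3"
  shows "christ E p k i j = Gam p k i j"
proof -
  have "christ E p k i j = (1/2) * (\<Sum>l<3. gi p k l * (dgm p i j l + dgm p j i l - dgm p l i j))"
    unfolding christ_def ginv_eq
    by (intro arg_cong[where f="\<lambda>x. (1/2) * x"] sum.cong refl) (simp add: pdg assms)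
  also have "\<dots> = Gam p k i j"
    using assms(2-4) unfolding less3 sum3
    apply (elim disjE)
    apply (simp_all add: Gam_def GV_def gi_def dgm_def dA_def dB_def e3_def unitv_def Let_def)
    apply (simp_all add: algebra_simps power2_eq_square)
    done
  finally show ?thesis .
qed


lemma pd_loc: assumes "\<And>q. q 2 > 0 \<Longrightarrow> F q = G q" "p 2 > 0"
  shows "pd F i p = pd G i p"
  unfolding pd_def
proof (rule deriv_cong_ev)
  have "eventually (\<lambda>t. t \<in> {- p 2 <..}) (nhds (0::real))"
    using assms(2) by (intro eventually_nhds_in_open) auto
  then show "\<forall>\<^sub>F t in nhds 0. F (p(i := p i + t)) = G (p(i := p i + t))"
  proof (rule eventually_mono)
    fix t :: real assume "t \<in> {- p 2 <..}"
    then have "(p(i := p i + t)) 2 > 0" using assms(2) by (cases "i = 2") auto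
    then show "F (p(i := p i + t)) = G (p(i := p i + t))" using assms(1) by blast
  qed
qed simp

definition de3 :: "vec \<Rightarrow> nat \<Rightarrow> nat \<Rightarrow> real" where
  "de3 p i l = (if l = 0 then dA p i else if l = 1 then dB p i else 0)"

definition DG :: "vec \<Rightarrow> nat \<Rightarrow> nat \<Rightarrow> real" where
  "DG p i l = (if i = 2 then a1 (p 2) else 0) * e3 p l + aa (p 2) * de3 p i l"

definition DG1 :: "vec \<Rightarrow> nat \<Rightarrow> nat \<Rightarrow> real" where
  "DG1 p l i = (let z = p 2 in if i = 0 then - (sg + L z) * de3 p 1 l
     else if i = 1 then aa z * de3 p 1 l
     else (dA p 1 * (L z + sg) - aa z * dB p 1) * e3 p l + (Ap p * (L z + sg) - aa z * Bp p) * de3 p 1 l)"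

lemma pd_DG: assumes "p 2 > 0" "l < 3" "i < 3"
  shows "pd (\<lambda>q. christ E q l 1 1) i p = DG p i l"
proof -
  have "pd (\<lambda>q. christ E q l 1 1) i p = pd (\<lambda>q. Gam q l 1 1) i p"
    by (rule pd_loc) (use assms christ_eq in auto)
  also have "\<dots> = DG p i l"
  proof (rule pd_at)
    have a2: "((\<lambda>t. aa (p 2 + t)) has_real_derivative a1 (p 2)) (at 0)"
      using dcomp[where \<phi>=aa and p=p and i=2, OF da[OF assms(1)]] by simp
    note AB = dAp[of p 0, OF assms(1)] dAp[of p 1, OF assms(1)] dAp[of p 2, OF assms(1)]
       dBp[of p 0, OF assms(1)] dBp[of p 1, OF assms(1)] dBp[of p 2, OF assms(1)]
    note AB' = AB[unfolded One_nat_def]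
    show "((\<lambda>t. Gam (p(i := p i + t)) l 1 1) has_real_derivative DG p i l) (at 0)"
      using assms(2,3) unfolding less3
      apply (elim disjE)
      apply (simp_all add: Gam_def GV_def e3_def DG_def de3_def)
      apply (rule derivative_eq_intros AB AB' a2 refl | simp)+
      done
  qed
  finally show ?thesis .
qed

lemma pd_DG1: assumes "p 2 > 0" "l < 3" "i < 3"
  shows "pd (\<lambda>q. christ E q l i 1) 1 p = DG1 p l i"
proof -
  have "pd (\<lambda>q. christ E q l i 1) 1 p = pd (\<lambda>q. Gam q l i 1) 1 p"
    by (rule pd_loc) (use assms christ_eq in auto)
  also have "\<dots> = DG1 p l i"
  proof (rule pd_at)
    have A: "((\<lambda>t. Ap (p(1 := p 1 + t))) has_real_derivative dA p 1) (at 0)"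
     and B: "((\<lambda>t. Bp (p(1 := p 1 + t))) has_real_derivative dB p 1) (at 0)"
      using dAp dBp assms by auto
    show "((\<lambda>t. Gam (p(1 := p 1 + t)) l i 1) has_real_derivative DG1 p l i) (at 0)"
      using assms(2,3) unfolding less3
      apply (elim disjE)
      apply (simp_all add: Gam_def GV_def e3_def DG1_def de3_def unitv_def Let_def)
      apply (rule derivative_eq_intros A B A[unfolded One_nat_def] B[unfolded One_nat_def] refl | simp)+
      done
  qed
  finally show ?thesis .
qed


lemma christ_zero: "k \<ge> 3 \<Longrightarrow> christ E p k i j = 0"
  unfolding christ_def ginv_eq by (simp add: gi_def)

lemma riem_11: assumes "p 2 > 0" "l < 3" "i < 3"
  shows "riem E p l i 1 1 = DG p i l - DG1 p l i +
     (\<Sum>m<3. Gam p l i m * Gam p m 1 1 - Gam p l 1 m * Gam p m i 1)"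
  unfolding riem_def pd_DG[of p l i, OF assms] pd_DG1[of p l i, OF assms]
  using assms by (intro arg_cong[where f="\<lambda>x. _ + x"] sum.cong refl) (simp add: christ_eq)

lemma vel_gamma: "vel (gamma_bc b c) = (\<lambda>s. unitv 1)"
proof (intro ext)
  fix s k show "vel (gamma_bc b c) s k = unitv 1 k"
  proof (cases "k = 1")
    case True then show ?thesis unfolding vel_def gamma_bc_def unitv_def
      by (auto intro!: DERIV_imp_deriv derivative_eq_intros)
  next
    case False
    then have "(\<lambda>t. gamma_bc b c t k) = (\<lambda>t. gamma_bc b c 0 k)" by (auto simp: gamma_bc_def)
    then show ?thesis unfolding vel_def using False by (simp add: unitv_def)
  qed
qed

lemma sum_unit1: "(\<Sum>i<3. \<Sum>j<3. F i j * unitv 1 i * unitv 1 j) = (F 1 1 :: real)"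
  by (simp add: sum3 unitv_def)

lemma sum_unit1': "(\<Sum>i<3. \<Sum>j<3. F i j * unitv 1 i * V j) = (\<Sum>j<3. F 1 j * V j :: real)"
  by (simp add: sum3 unitv_def)

definition t2 :: "real \<Rightarrow> nat \<Rightarrow> real" where
  "t2 c k = (if k = 0 then aa c * (sg + L c) else if k = 1 then - (aa c * aa c) else 0)"

lemma T1_eq: assumes "c > 0"
  shows "cov E (gamma_bc b c) (vel (gamma_bc b c)) = (\<lambda>s k. aa c * e3 (gamma_bc b c s) k)"
proof (intro ext)
  fix s k
  have p2: "gamma_bc b c s 2 > 0" using assms by (simp add: gamma_bc_def)
  show "cov E (gamma_bc b c) (vel (gamma_bc b c)) s k = aa c * e3 (gamma_bc b c s) k"
    unfolding cov_def vel_gamma sum_unit1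
  proof (cases "k < 3")
    case True
    then show "deriv (\<lambda>t. unitv 1 k) s + christ E (gamma_bc b c s) k 1 1 = aa c * e3 (gamma_bc b c s) k"
      using christ_eq[of "gamma_bc b c s" k 1 1, OF p2 True] by (simp add: Gam_def GV_def gamma_bc_def)
  next
    case False
    then show "deriv (\<lambda>t. unitv 1 k) s + christ E (gamma_bc b c s) k 1 1 = aa c * e3 (gamma_bc b c s) k"
      by (simp add: christ_zero e3_def)
  qed
qed

lemma T2_eq: assumes "c > 0"
  shows "cov E (gamma_bc b c) (\<lambda>s k. aa c * e3 (gamma_bc b c s) k) = (\<lambda>s. t2 c)"
proof (intro ext)
  fix s k
  have p2: "gamma_bc b c s 2 > 0" using assms by (simp add: gamma_bc_def)
  have D: "deriv (\<lambda>t. aa c * e3 (gamma_bc b c t) k) s =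
      (if k = 0 then aa c * (sg * 2) else if k = 1 then aa c * (- aa c) else 0)"
    by (rule DERIV_imp_deriv)
       (auto simp: e3_def Ap_def Bp_def gamma_bc_def intro!: derivative_eq_intros)
  show "cov E (gamma_bc b c) (\<lambda>s k. aa c * e3 (gamma_bc b c s) k) s k = t2 c k"
    unfolding cov_def vel_gamma sum_unit1' D
  proof (cases "k < 3")
    case True
    then show "(if k = 0 then aa c * (sg * 2) else if k = 1 then aa c * (- aa c) else 0) +
      (\<Sum>j<3. christ E (gamma_bc b c s) k 1 j * (aa c * e3 (gamma_bc b c s) j)) = t2 c k"
      using p2 unfolding less3 sum3
      apply (elim disjE)
      apply (simp_all add: christ_eq Gam_def GV_def e3_def unitv_def t2_def gamma_bc_def)
      apply (simp_all add: algebra_simps power2_eq_square)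
      done
  next
    case False
    then show "(if k = 0 then aa c * (sg * 2) else if k = 1 then aa c * (- aa c) else 0) +
      (\<Sum>j<3. christ E (gamma_bc b c s) k 1 j * (aa c * e3 (gamma_bc b c s) j)) = t2 c k"
      by (simp add: christ_zero t2_def)
  qed
qed


lemma sum_curv: "(\<Sum>i<3. \<Sum>j<3. \<Sum>k<3. F i j k * X i * unitv 1 j * unitv 1 k) = (\<Sum>i<3. F i 1 1 * X i :: real)"
  by (simp add: sum3 unitv_def)

lemma biharm: assumes "c > 0" and hyp: "a1 c = 2 * aa c * aa c + 4 + 4 * sg * L c"
  shows "biharmonic E (gamma_bc b c)"
  unfolding biharmonic_def Let_def unfolding T1_eq[OF assms(1)] unfolding T2_eq[OF assms(1)] unfolding vel_gamma
proof (intro allI impI)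
  fix s k assume k: "(k::nat) < 3"
  define p where "p = gamma_bc b c s"
  have p2: "p 2 > 0" and p0: "p 0 = b" and p1: "p 1 = s" and pc: "p 2 = c"
    using assms(1) by (auto simp: p_def gamma_bc_def)
  have C: "cov E (gamma_bc b c) (\<lambda>s. t2 c) s k = (\<Sum>j<3. Gam p k 1 j * t2 c j)"
    unfolding cov_def vel_gamma sum_unit1' p_def[symmetric]
    using christ_eq[of p k 1, OF p2 k] by (simp add: sum3)
  have R: "curv E p (\<lambda>k. aa c * e3 p k) (unitv 1) (unitv 1) k =
      (\<Sum>i<3. (DG p i k - DG1 p k i + (\<Sum>m<3. Gam p k i m * Gam p m 1 1 - Gam p k 1 m * Gam p m i 1)) * (aa c * e3 p i))"
    unfolding curv_def sum_curv
    using riem_11[of p k, OF p2 k] by (intro sum.cong refl) simp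
  have sg2: "sg * sg = 1" using sgc by auto
  have main: "(\<Sum>j<3. Gam p k 1 j * t2 c j) + (\<Sum>i<3. (DG p i k - DG1 p k i + (\<Sum>m<3. Gam p k i m * Gam p m 1 1 - Gam p k 1 m * Gam p m i 1)) * (aa c * e3 p i)) = 0"
    using k unfolding less3 sum3
    apply (elim disjE)
    apply (simp_all add: Gam_def GV_def DG_def DG1_def de3_def dA_def dB_def e3_def unitv_def t2_def p0 p1 p1[unfolded One_nat_def] pc Let_def hyp)
    by (thin_tac "k = _", insert sg2, algebra)+
  show "cov E (gamma_bc b c) (\<lambda>s. t2 c) s k + curv E (gamma_bc b c s) (\<lambda>k. aa c * e3 (gamma_bc b c s) k) (unitv 1) (unitv 1) k = 0"
    unfolding p_def[symmetric] C R using main .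
qed


lemma not_geo: assumes "c > 0" "aa c \<noteq> 0" shows "\<not> geodesic E (gamma_bc b c)"
proof
  assume "geodesic E (gamma_bc b c)"
  then have "cov E (gamma_bc b c) (vel (gamma_bc b c)) 0 2 = 0" unfolding geodesic_def by auto
  then show False using assms unfolding T1_eq[OF assms(1)] by (simp add: e3_def)
qed

lemma legendre: "legendre_curve E (gamma_bc b c)"
  unfolding legendre_curve_def ginner_def gmat_eq vel_gamma E_eq
  by (simp add: sum3 unitv_def gm_def)

end

lemma aa_pow: fixes z n :: real assumes "z > 0"
  shows "deriv (\<lambda>z. z powr (-n)) z / (2 * (\<lambda>z. z powr (-n)) z) = - n / (2 * z)"
proof -
  have "deriv (\<lambda>z. z powr (-n)) z = - n * z powr (- n - 1)"
    using has_real_derivative_powr[OF assms, of "-n"] by (rule DERIV_imp_deriv)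
  then show ?thesis using assms by (simp add: powr_diff field_simps powr_minus)
qed

theorem bih_main:
  fixes n sg :: real
  assumes "0 < n" and "n < 1" and sgc: "sg = 1 \<or> sg = -1"
  and c: "c > 0" and hyp: "8 * c^2 * (1 + sg * c powr (-n)) = n * (1 - n)"
  and f: "smooth_pos f" and h: "smooth_pos h"
  shows "legendre_curve (kmu_frame sg (\<lambda>z. z powr (-n)) f h) (gamma_bc b c)
              \<and> proper_biharmonic (kmu_frame sg (\<lambda>z. z powr (-n)) f h) (gamma_bc b c)"
proof -
  define L where "L = (\<lambda>z::real. z powr (-n))"
  define aa where "aa = (\<lambda>z. deriv L z / (2 * L z))"
  have aaz: "aa z = - n / (2 * z)" if "z > 0" for z
    using aa_pow[OF that, of n] by (simp add: aa_def L_def)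
  have diff: "\<And>z. z > 0 \<Longrightarrow> (g has_real_derivative deriv g z) (at z)" if "smooth_pos g" for g
    using that unfolding smooth_pos_def
    by (metis DERIV_deriv_iff_real_differentiable funpow_0)
  interpret kmu sg L aa f h "\<lambda>z. - n * z powr (- n - 1)" "\<lambda>z. n / (2 * z^2)" "deriv f" "deriv h"
  proof
    show "sg = 1 \<or> sg = -1" by fact
    show "deriv L z / (2 * L z) = aa z" for z by (simp add: aa_def)
    show "(L has_real_derivative - n * z powr (- n - 1)) (at z)" if "z > 0" for z
      using has_real_derivative_powr[OF that, of "-n"] by (simp add: L_def)
    show "(aa has_real_derivative n / (2 * z^2)) (at z)" if z: "z > 0" for z
    proof -
      have ev: "eventually (\<lambda>x. aa x = - n / (2 * x)) (nhds z)"
      proof -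
        have "eventually (\<lambda>x. x \<in> {0<..}) (nhds z)" using z by (intro eventually_nhds_in_open) auto
        then show ?thesis by (rule eventually_mono) (simp add: aaz)
      qed
      have "((\<lambda>x. - n / (2 * x)) has_real_derivative n / (2 * z^2)) (at z)"
        using z by (auto intro!: derivative_eq_intros simp: power2_eq_square field_simps)
      then show ?thesis using DERIV_cong_ev[OF refl ev refl] by simp
    qed
    show "(f has_real_derivative deriv f z) (at z)" if "z > 0" for z using diff[OF f that] .
    show "(h has_real_derivative deriv h z) (at z)" if "z > 0" for z using diff[OF h that] .
  qed
  have hyp': "n / (2 * c^2) = 2 * aa c * aa c + 4 + 4 * sg * L c"
  proof -
    have "n / (2 * c^2) - 2 * aa c * aa c = n * (1 - n) / (2 * c^2)"
      using c by (simp add: aaz field_simps power2_eq_square)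
    also have "\<dots> = 4 + 4 * sg * L c" using hyp c by (simp add: L_def field_simps power2_eq_square)
    finally show ?thesis by simp
  qed
  have "aa c \<noteq> 0" using c assms(1) by (simp add: aaz)
  then show ?thesis using legendre biharm[OF c hyp'] not_geo[OF c] unfolding proper_biharmonic_def L_def
    by auto
qed




lemma exists_c:
  fixes n sg :: real
  assumes n0: "0 < n" and n1: "n < 1" and sgc: "sg = 1 \<or> sg = -1"
  shows "\<exists>c>0. 8 * c^2 * (1 + sg * c powr (-n)) = n * (1 - n)"
proof -
  define g where "g = (\<lambda>c::real. 8 * c^2 * (1 + sg * c powr (-n)))"
  have cont: "continuous_on {a..b} g" if "a > 0" for a b
    unfolding g_def using that by (intro continuous_intros) auto
  have nn1: "0 < n * (1 - n)" using n0 n1 by simp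
  have nn2: "n * (1 - n) \<le> 1" using n0 n1 by (intro mult_le_one) auto
  note nn = nn1 nn2
  obtain a b where ab: "0 < a" "a \<le> b" "g a \<le> n * (1 - n)" "n * (1 - n) \<le> g b"
  proof (cases "sg = 1")
    case True
    define a where "a = n * (1 - n) / 32"
    have a0: "0 < a" "a \<le> 1" using nn by (auto simp: a_def)
    have p: "a powr (2 - n) \<le> a" using a0 n1 by (intro powr_le_one_le) auto
    have e: "a^2 * a powr (-n) = a powr (2 - n)"
      using a0 by (simp add: powr_diff powr_minus divide_simps powr_realpow[symmetric] power2_eq_square)
    have sq: "a^2 \<le> a" using a0 by (simp add: power2_eq_square mult_le_cancel_left1)
    have "g a = 8 * a^2 + 8 * (a^2 * a powr (-n))" by (simp add: g_def True algebra_simps)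
    also have "\<dots> \<le> 16 * a" using p sq e by linarith
    also have "\<dots> \<le> n * (1 - n)" using nn by (simp add: a_def)
    finally have ga: "g a \<le> n * (1 - n)" .
    have gb: "n * (1 - n) \<le> g 1" using nn by (simp add: g_def True)
    show ?thesis by (rule that[of a 1]) (use a0 ga gb in auto)
  next
    case False
    then have sgm: "sg = -1" using sgc by auto
    define b where "b = (2::real) powr (1 / n)"
    have b1: "1 \<le> b" unfolding b_def using n0 by (intro ge_one_powr_ge_zero) auto
    have bp: "b powr (-n) = 1/2"
      unfolding b_def using n0 by (simp add: powr_powr powr_minus)
    have "g b = 4 * b^2" by (simp add: g_def sgm bp)
    moreover have "1 \<le> b^2" using b1 by (simp add: one_le_power)
    ultimately have gb: "n * (1 - n) \<le> g b" using nn by linarith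
    have ga: "g 1 \<le> n * (1 - n)" using nn by (simp add: g_def sgm)
    show ?thesis by (rule that[of 1 b]) (use b1 ga gb in auto)
  qed
  then obtain x where "a \<le> x" "x \<le> b" "g x = n * (1 - n)"
    using IVT'[of g a "n * (1 - n)" b] cont[OF ab(1)] by auto
  then have "x > 0" "8 * x^2 * (1 + sg * x powr (-n)) = n * (1 - n)" using ab(1) by (auto simp: g_def)
  then show ?thesis by blast
qed


theorem mainTheorem2:
  fixes n sg :: real
  assumes "0 < n" and "n < 1" and "sg = 1 \<or> sg = -1"
  shows "(\<exists>c>0. 8 * c^2 * (1 + sg * c powr (-n)) = n * (1 - n)) \<and>
         (\<forall>c b f h. c > 0 \<longrightarrow> 8 * c^2 * (1 + sg * c powr (-n)) = n * (1 - n)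
            \<longrightarrow> smooth_pos f \<longrightarrow> smooth_pos h
            \<longrightarrow> legendre_curve (kmu_frame sg (\<lambda>z. z powr (-n)) f h) (gamma_bc b c)
              \<and> proper_biharmonic (kmu_frame sg (\<lambda>z. z powr (-n)) f h) (gamma_bc b c))"
  using exists_c[OF assms] bih_main[OF assms] by blast


end
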